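(* Let $G=(V,E)$ be a claw-free graph and $I$ a maximum cardinality independent set of $G$. For any $a,b\in I$ with $a\ne b$ we have $N(\mathtt{T1}^a_b)\cap V_b=\mathtt{T1}^b_a$ and $N(\mathtt{T2}^a)\cap V_b\subseteq\mathtt{T2}^b$.
   Context: Graphs are finite, simple, undirected; claw-free means no induced $K_{1,3}$. For a set $X$ of vertices, $N(X)=\bigcup_{x\in X}N[x]\setminus X$. For $a\in I$, the $1$-pack $V_a$ is $\{v\in V\setminus I : N(v)\cap I=\{a\}\}$. Each $V_a$ is partitioned according to neighbourhoods in the union of all $1$-packs: $\mathtt{T0}^a$ consists of $v\in V_a$ with no neighbour in any $1$-pack other than $V_a$; for $b\in I\setminus\{a\}$, $\mathtt{T1}^a_b$ consists of $v\in V_a$ that have a neighbour in $V_b$ and no neighbour in any $1$-pack other than $V_a$ and $V_b$; $\mathtt{T2}^a$ consists of $v\in V_a$ having neighbours in at least two distinct $1$-packs other than $V_a$. *)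

theory Defs
  imports Main
begin

definition simple_graph :: "'a set \<Rightarrow> ('a \<Rightarrow> 'a \<Rightarrow> bool) \<Rightarrow> bool" where
  "simple_graph V E \<longleftrightarrow> finite V \<and> (\<forall>u v. E u v \<longrightarrow> u \<in> V \<and> v \<in> V) \<and>
     (\<forall>u v. E u v \<longrightarrow> E v u) \<and> (\<forall>v. \<not> E v v)"

definition nbhd :: "'a set \<Rightarrow> ('a \<Rightarrow> 'a \<Rightarrow> bool) \<Rightarrow> 'a \<Rightarrow> 'a set" where
  "nbhd V E v = {u \<in> V. E v u}"

definition cnbhd :: "'a set \<Rightarrow> ('a \<Rightarrow> 'a \<Rightarrow> bool) \<Rightarrow> 'a \<Rightarrow> 'a set" where
  "cnbhd V E v = insert v (nbhd V E v)"

definition set_nbhd :: "'a set \<Rightarrow> ('a \<Rightarrow> 'a \<Rightarrow> bool) \<Rightarrow> 'a set \<Rightarrow> 'a set" where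
  "set_nbhd V E X = (\<Union>x\<in>X. cnbhd V E x) - X"

definition independent :: "'a set \<Rightarrow> ('a \<Rightarrow> 'a \<Rightarrow> bool) \<Rightarrow> 'a set \<Rightarrow> bool" where
  "independent V E S \<longleftrightarrow> S \<subseteq> V \<and> (\<forall>u\<in>S. \<forall>v\<in>S. \<not> E u v)"

definition max_independent :: "'a set \<Rightarrow> ('a \<Rightarrow> 'a \<Rightarrow> bool) \<Rightarrow> 'a set \<Rightarrow> bool" where
  "max_independent V E I \<longleftrightarrow> independent V E I \<and>
     (\<forall>S. independent V E S \<longrightarrow> card S \<le> card I)"

definition claw_free :: "'a set \<Rightarrow> ('a \<Rightarrow> 'a \<Rightarrow> bool) \<Rightarrow> bool" where
  "claw_free V E \<longleftrightarrow> \<not> (\<exists>c x y z. c \<in> V \<and> x \<in> V \<and> y \<in> V \<and> z \<in> V \<and>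
      E c x \<and> E c y \<and> E c z \<and> x \<noteq> y \<and> x \<noteq> z \<and> y \<noteq> z \<and>
      \<not> E x y \<and> \<not> E x z \<and> \<not> E y z)"

definition pack1 :: "'a set \<Rightarrow> ('a \<Rightarrow> 'a \<Rightarrow> bool) \<Rightarrow> 'a set \<Rightarrow> 'a \<Rightarrow> 'a set" where
  "pack1 V E I a = {v \<in> V - I. nbhd V E v \<inter> I = {a}}"

definition T1 :: "'a set \<Rightarrow> ('a \<Rightarrow> 'a \<Rightarrow> bool) \<Rightarrow> 'a set \<Rightarrow> 'a \<Rightarrow> 'a \<Rightarrow> 'a set" where
  "T1 V E I a b = {v \<in> pack1 V E I a.
      (\<exists>u \<in> pack1 V E I b. E v u) \<and>
      (\<forall>c \<in> I - {a, b}. \<forall>u \<in> pack1 V E I c. \<not> E v u)}"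

definition T2 :: "'a set \<Rightarrow> ('a \<Rightarrow> 'a \<Rightarrow> bool) \<Rightarrow> 'a set \<Rightarrow> 'a \<Rightarrow> 'a set" where
  "T2 V E I a = {v \<in> pack1 V E I a.
      \<exists>b c. b \<in> I - {a} \<and> c \<in> I - {a} \<and> b \<noteq> c \<and>
        (\<exists>u \<in> pack1 V E I b. E v u) \<and> (\<exists>w \<in> pack1 V E I c. E v w)}"

end

theory Submission
  imports Defs
begin

lemma packD:
  assumes "v \<in> pack1 V E I a" and "simple_graph V E"
  shows "v \<in> V" "v \<notin> I" "a \<in> I" "E v a" "\<And>c. c \<in> I \<Longrightarrow> E v c \<Longrightarrow> c = a"
proof -
  have h: "v \<in> V" "v \<notin> I" "nbhd V E v \<inter> I = {a}" using assms unfolding pack1_def by auto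
  show "v \<in> V" "v \<notin> I" using h by auto
  show "a \<in> I" "E v a" using h(3) unfolding nbhd_def by auto
  show "\<And>c. c \<in> I \<Longrightarrow> E v c \<Longrightarrow> c = a"
  proof -
    fix c assume c: "c \<in> I" "E v c"
    have "c \<in> V" using c assms(2) unfolding simple_graph_def by blast
    then have "c \<in> nbhd V E v \<inter> I" using c unfolding nbhd_def by auto
    then show "c = a" using h(3) by auto
  qed
qed

lemma pack_disj:
  assumes "v \<in> pack1 V E I a" "v \<in> pack1 V E I b" "simple_graph V E"
  shows "a = b"
  using packD[OF assms(1,3)] packD[OF assms(2,3)] by blast

lemma clawD:
  assumes "claw_free V E" "c \<in> V" "x \<in> V" "y \<in> V" "z \<in> V"
    "E c x" "E c y" "E c z" "x \<noteq> y" "x \<noteq> z" "y \<noteq> z" "\<not> E x y" "\<not> E x z"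
  shows "E y z"
  using assms unfolding claw_free_def by blast

theorem lemma12:
  fixes V :: "'a set" and E :: "'a \<Rightarrow> 'a \<Rightarrow> bool" and I :: "'a set" and a b :: 'a
  assumes "simple_graph V E"
    and "claw_free V E"
    and "max_independent V E I"
    and "a \<in> I" and "b \<in> I" and "a \<noteq> b"
  shows "set_nbhd V E (T1 V E I a b) \<inter> pack1 V E I b = T1 V E I b a
     \<and> set_nbhd V E (T2 V E I a) \<inter> pack1 V E I b \<subseteq> T2 V E I b"
proof -
  note G = assms(1)
  have sym: "\<And>u v. E u v \<Longrightarrow> E v u" using G unfolding simple_graph_def by blast
  have IV: "I \<subseteq> V" using assms(3) unfolding max_independent_def independent_def by blast
  have ind: "\<And>u v. u \<in> I \<Longrightarrow> v \<in> I \<Longrightarrow> \<not> E u v"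
    using assms(3) unfolding max_independent_def independent_def by blast
  have nbE: "\<And>X v. v \<in> set_nbhd V E X \<Longrightarrow> \<exists>x\<in>X. E x v"
    unfolding set_nbhd_def cnbhd_def nbhd_def by auto
  have c1: "set_nbhd V E (T1 V E I a b) \<inter> pack1 V E I b \<subseteq> T1 V E I b a"
  proof
    fix v assume v: "v \<in> set_nbhd V E (T1 V E I a b) \<inter> pack1 V E I b"
    then obtain x where x: "x \<in> T1 V E I a b" "E x v" using nbE by blast
    have xa: "x \<in> pack1 V E I a" using x unfolding T1_def by blast
    have vb: "v \<in> pack1 V E I b" using v by blast
    have "\<not> E v w" if c: "c \<in> I - {b, a}" and w: "w \<in> pack1 V E I c" for c w
    proof
      assume vw: "E v w"
      have xw: "\<not> E x w" using x(1) c w unfolding T1_def by blast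
      have "\<not> E b x" using packD[OF xa G] assms sym by blast
      moreover have "\<not> E b w" using packD[OF w G] assms c sym by blast
      moreover have "b \<noteq> x" "b \<noteq> w" using packD(2)[OF xa G] packD(2)[OF w G] assms by auto
      moreover have "x \<noteq> w" using pack_disj[OF xa _ G] w c by blast
      ultimately show False
        using clawD[OF assms(2) packD(1)[OF vb G], of b x w] IV assms(5)
          packD[OF xa G] packD[OF vb G] packD(1)[OF w G] sym x(2) xw vw by blast
    qed
    then show "v \<in> T1 V E I b a" unfolding T1_def using vb x xa sym by blast
  qed
  have c2: "T1 V E I b a \<subseteq> set_nbhd V E (T1 V E I a b) \<inter> pack1 V E I b"
  proof
    fix v assume v: "v \<in> T1 V E I b a"
    have vb: "v \<in> pack1 V E I b" using v unfolding T1_def by blast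
    obtain x where x: "x \<in> pack1 V E I a" "E v x" using v unfolding T1_def by blast
    have "\<not> E x w" if c: "c \<in> I - {a, b}" and w: "w \<in> pack1 V E I c" for c w
    proof
      assume xw: "E x w"
      have vw: "\<not> E v w" using v c w unfolding T1_def by blast
      have "\<not> E a v" using packD[OF vb G] assms sym by blast
      moreover have "\<not> E a w" using packD[OF w G] assms c sym by blast
      moreover have "a \<noteq> v" "a \<noteq> w" using packD(2)[OF vb G] packD(2)[OF w G] assms by auto
      moreover have "v \<noteq> w" using pack_disj[OF vb _ G] w c by blast
      ultimately show False
        using clawD[OF assms(2) packD(1)[OF x(1) G], of a v w] IV assms(4)
          packD[OF x(1) G] packD(1)[OF vb G] packD(1)[OF w G] sym x(2) xw vw by blast
    qed
    then have "x \<in> T1 V E I a b" unfolding T1_def using x vb sym by blast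
    moreover have "v \<notin> T1 V E I a b" using pack_disj[OF vb _ G] assms(6) unfolding T1_def by blast
    ultimately show "v \<in> set_nbhd V E (T1 V E I a b) \<inter> pack1 V E I b"
      unfolding set_nbhd_def cnbhd_def nbhd_def using vb packD(1)[OF vb G] x(2) sym by blast
  qed
  have c3: "set_nbhd V E (T2 V E I a) \<inter> pack1 V E I b \<subseteq> T2 V E I b"
  proof
    fix v assume v: "v \<in> set_nbhd V E (T2 V E I a) \<inter> pack1 V E I b"
    then obtain x where x: "x \<in> T2 V E I a" "E x v" using nbE by blast
    have xa: "x \<in> pack1 V E I a" using x unfolding T2_def by blast
    have vb: "v \<in> pack1 V E I b" using v by blast
    obtain c u where cu: "c \<in> I - {a}" "c \<noteq> b" "u \<in> pack1 V E I c" "E x u"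
      using x(1) unfolding T2_def by blast
    have "\<not> E a v" using packD[OF vb G] assms sym by blast
    moreover have "\<not> E a u" using packD[OF cu(3) G] assms cu sym by blast
    moreover have "a \<noteq> v" "a \<noteq> u" using packD(2)[OF vb G] packD(2)[OF cu(3) G] assms by auto
    moreover have "v \<noteq> u" using pack_disj[OF vb _ G] cu by blast
    ultimately have "E v u"
      using clawD[OF assms(2) packD(1)[OF xa G], of a v u] IV assms(4)
        packD[OF xa G] packD(1)[OF vb G] packD(1)[OF cu(3) G] x(2) cu(4) by blast
    then show "v \<in> T2 V E I b" unfolding T2_def
      using vb xa cu x(2) sym assms by blast
  qed
  show ?thesis using c1 c2 c3 by blast
qed

end
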